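(* Let $\alpha,\beta,\mu$ be real parameters with $0<\alpha\leq 1$, $\beta>0$, $0<\mu\leq 1$. For an arbitrary initial point $(x^{(0)},y^{(0)})\in\mathbb{R}^2_+$ define recursively, for $n\geq 1$, $$x^{(n)}=\beta y^{(n-1)}-\frac{\alpha x^{(n-1)}}{1+x^{(n-1)}}+x^{(n-1)},\qquad y^{(n)}=\frac{\alpha x^{(n-1)}}{1+x^{(n-1)}}-\mu y^{(n-1)}+y^{(n-1)}.$$ Then for all $n\geq 0$: $$0\leq y^{(n)}\leq y^{(0)}\ \text{ if } y^{(0)}>\frac{\alpha}{\mu},\qquad 0\leq y^{(n)}\leq \frac{\alpha}{\mu}\ \text{ if } y^{(0)}<\frac{\alpha}{\mu}.$$
   Context: $\mathbb{R}^2_+=\{(x,y)\in\mathbb{R}^2: x\geq 0,\ y\geq 0\}$. Under the stated parameter conditions the map $(x,y)\mapsto\left(\beta y-\frac{\alpha x}{1+x}+x,\ \frac{\alpha x}{1+x}-\mu y+y\right)$ maps $\mathbb{R}^2_+$ into itself, so all $x^{(n)},y^{(n)}$ are nonnegative. *)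

theory Defs
  imports Complex_Main
begin

definition step_map :: "real \<Rightarrow> real \<Rightarrow> real \<Rightarrow> real \<times> real \<Rightarrow> real \<times> real" where
  "step_map \<alpha> \<beta> \<mu> p = (let x = fst p; y = snd p in
     (\<beta> * y - \<alpha> * x / (1 + x) + x, \<alpha> * x / (1 + x) - \<mu> * y + y))"

primrec orbit :: "real \<Rightarrow> real \<Rightarrow> real \<Rightarrow> real \<Rightarrow> real \<Rightarrow> nat \<Rightarrow> real \<times> real" where
  "orbit \<alpha> \<beta> \<mu> x0 y0 0 = (x0, y0)"
| "orbit \<alpha> \<beta> \<mu> x0 y0 (Suc n) = step_map \<alpha> \<beta> \<mu> (orbit \<alpha> \<beta> \<mu> x0 y0 n)"

end

theory Submission
  imports Defs
begin

lemma frac_bounds: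
  fixes a x :: real assumes "0 < a" "a \<le> 1" "0 \<le> x"
  shows "0 \<le> a * x / (1 + x)" "a * x / (1 + x) \<le> a" "a * x / (1 + x) \<le> x"
proof -
  show "0 \<le> a * x / (1 + x)" using assms by simp
  show "a * x / (1 + x) \<le> a" using assms by (simp add: divide_simps mult.commute)
  have "a * x \<le> x * (1 + x)" using assms
  proof -
    have "a * x \<le> 1 * x" using assms by (intro mult_right_mono) auto
    also have "\<dots> \<le> x * (1 + x)" using assms by (simp add: algebra_simps)
    finally show ?thesis .
  qed
  then show "a * x / (1 + x) \<le> x" using assms by (simp add: divide_simps mult.commute)
qed

lemma inv:
  fixes \<alpha> \<beta> \<mu> x0 y0 M :: real
  assumes "0 < \<alpha>" "\<alpha> \<le> 1" "0 < \<beta>" "0 < \<mu>" "\<mu> \<le> 1"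
    and "0 \<le> x0" "0 \<le> y0" "y0 \<le> M" "\<alpha> \<le> \<mu> * M"
  shows "0 \<le> fst (orbit \<alpha> \<beta> \<mu> x0 y0 n) \<and> 0 \<le> snd (orbit \<alpha> \<beta> \<mu> x0 y0 n)
         \<and> snd (orbit \<alpha> \<beta> \<mu> x0 y0 n) \<le> M"
proof (induction n)
  case 0 then show ?case using assms by simp
next
  case (Suc n)
  obtain x y where xy: "orbit \<alpha> \<beta> \<mu> x0 y0 n = (x, y)" by fastforce
  with Suc have h: "0 \<le> x" "0 \<le> y" "y \<le> M" by auto
  note fb = frac_bounds[OF assms(1,2) h(1)]
  have "0 \<le> \<beta> * y" using assms h by simp
  moreover have "0 \<le> (1 - \<mu>) * y" using assms h by simp
  moreover have "(1 - \<mu>) * y \<le> (1 - \<mu>) * M" using assms h by (simp add: mult_left_mono)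
  ultimately show ?case using xy fb assms
    by (simp add: step_map_def Let_def algebra_simps)
qed

theorem lemma1:
  fixes \<alpha> \<beta> \<mu> x0 y0 :: real and n :: nat
  assumes "0 < \<alpha>" "\<alpha> \<le> 1" "0 < \<beta>" "0 < \<mu>" "\<mu> \<le> 1"
    and "0 \<le> x0" "0 \<le> y0"
  shows "(y0 > \<alpha> / \<mu> \<longrightarrow> 0 \<le> snd (orbit \<alpha> \<beta> \<mu> x0 y0 n) \<and> snd (orbit \<alpha> \<beta> \<mu> x0 y0 n) \<le> y0)
       \<and> (y0 < \<alpha> / \<mu> \<longrightarrow> 0 \<le> snd (orbit \<alpha> \<beta> \<mu> x0 y0 n) \<and> snd (orbit \<alpha> \<beta> \<mu> x0 y0 n) \<le> \<alpha> / \<mu>)"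
proof safe
  assume "y0 > \<alpha> / \<mu>"
  then have "\<alpha> \<le> \<mu> * y0" using assms by (simp add: divide_simps mult.commute)
  from inv[OF assms order_refl this, of n]
  show "0 \<le> snd (orbit \<alpha> \<beta> \<mu> x0 y0 n)" "snd (orbit \<alpha> \<beta> \<mu> x0 y0 n) \<le> y0" by auto
next
  assume "y0 < \<alpha> / \<mu>"
  have m: "\<alpha> \<le> \<mu> * (\<alpha> / \<mu>)" using assms by simp
  from inv[OF assms _ m, of n] \<open>y0 < \<alpha> / \<mu>\<close>
  show "0 \<le> snd (orbit \<alpha> \<beta> \<mu> x0 y0 n)" "snd (orbit \<alpha> \<beta> \<mu> x0 y0 n) \<le> \<alpha> / \<mu>" by auto
qed

end
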